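(* Let $n\ge3$, let $\boldsymbol\ell=(\ell_1,\ldots,\ell_n)$ be positive numbers, let $\mathbf b=(b_1,\ldots,b_n)$ be a vector of offset Kasner exponents, and let $\mu,\tau_0$ be nonzero constants. Then the CMC conformal data set $(g_{\boldsymbol\ell},\mu\,\sigma_{\mathbf b,\boldsymbol\ell},\tau_0)$ on $T^n$ determines (generates exactly one solution of the constraint equations, namely) the Cauchy data of the slice $t=t_0:=1/\tau_0$ of a Kasner spacetime, which is expanding if $\tau_0>0$ and contracting if $\tau_0<0$. Its Kasner exponents are $\mathbf a=s\mathbf b+(\frac1n,\ldots,\frac1n)$, where $s=1$ if $\mu$ and $\tau_0$ have the same sign and $s=-1$ otherwise. The slice $t=t_0$ has metric $c^{q-2}g_{\boldsymbol\ell}$ with $c=|\mu/\tau_0|^{1/q}$, and the slice $t=\mathrm{sgn}(t_0)$ of this spacetime has metric $g_{\bar{\boldsymbol\ell}}$, where $\bar\ell_k=|t_0|^{-a_k}c^{q/2-1}\ell_k$.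
   Context: $q=\frac{2n}{n-2}$, $\kappa=\frac{n-1}{n}$. $T^n=(\mathbb{R}/\mathbb{Z})^n$ with unit coordinates $(s^1,\ldots,s^n)$; $g_{\boldsymbol\ell}=\sum_k\ell_k^2(ds^k)^2$. Offset Kasner exponents: $\mathbf b\in\mathbb{R}^n$ with $\sum_kb_k=0$ and $\sum_kb_k^2=\kappa$. Then $\sigma_{\mathbf b,\boldsymbol\ell}=\sum_kb_k\ell_k^2(ds^k)^2$ is transverse-traceless for $g_{\boldsymbol\ell}$. CMC conformal method: a data set $(g,\sigma,\tau_0)$ ($\sigma$ transverse-traceless, $\tau_0$ constant) generates the solutions $\bar g=\phi^{q-2}g$, $\bar K=\phi^{-2}\sigma+\frac{\tau_0}{n}\bar g$ of the Einstein constraint equations $R_{\bar g}-|\bar K|^2+(\mathrm{tr}\bar K)^2=0$, $\mathrm{div}_{\bar g}\bar K=d\,\mathrm{tr}\bar K$, one for each positive solution $\phi$ of $-2\kappa q\Delta_g\phi+R_g\phi-|\sigma|_g^2\phi^{-q-1}+\kappa\tau_0^2\phi^{q-1}=0$. A Kasner spacetime with exponents $\mathbf a$ ($\sum a_k=1$, $\sum a_k^2=1$) and lengths $\bar{\boldsymbol\ell}$ is $\mathbb{R}_+\times T^n$ (expanding) or $\mathbb{R}_-\times T^n$ (contracting) with metric $-dt^2+\sum_k|t|^{2a_k}\bar\ell_k^2(ds^k)^2$, time-oriented by $\partial_t$. The Cauchy data of a slice $\{t=t_0\}$ is its induced metric and second fundamental form $K(X,Y)=-\langle\partial_t,\nabla_XY\rangle$.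 *)

theory Defs
  imports "HOL-Analysis.Analysis"
begin

text \<open>The torus T^n is (R/Z)^n; functions/tensor fields on T^n are
periodic functions on the coordinate space real^'n (unit coordinates s^1..s^n,
n = CARD('n)). A symmetric 2-tensor field is given by its component matrix
w.r.t. the coordinate coframe ds^k at each point.\<close>

definition q_exp :: "nat \<Rightarrow> real" where "q_exp n = 2 * real n / (real n - 2)"
definition kappa :: "nat \<Rightarrow> real" where "kappa n = (real n - 1) / real n"

definition periodic_fn :: "(real^'n \<Rightarrow> 'b) \<Rightarrow> bool" where
  "periodic_fn f \<longleftrightarrow> (\<forall>k s. f (s + axis k 1) = f s)"

definition pd :: "'n \<Rightarrow> (real^'n \<Rightarrow> real) \<Rightarrow> real^'n \<Rightarrow> real" where
  "pd k f s = deriv (\<lambda>h. f (s + h *\<^sub>R axis k 1)) 0"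

definition has_pd :: "'n \<Rightarrow> (real^'n \<Rightarrow> real) \<Rightarrow> bool" where
  "has_pd k f \<longleftrightarrow> (\<forall>s. (\<lambda>h. f (s + h *\<^sub>R axis k 1)) differentiable (at 0))"

definition C2_fn :: "(real^'n \<Rightarrow> real) \<Rightarrow> bool" where
  "C2_fn f \<longleftrightarrow> continuous_on UNIV f \<and>
     (\<forall>i. has_pd i f \<and> continuous_on UNIV (pd i f) \<and>
       (\<forall>j. has_pd j (pd i f) \<and> continuous_on UNIV (pd j (pd i f))))"

definition ginv :: "(real^'n \<Rightarrow> real^'n^'n) \<Rightarrow> real^'n \<Rightarrow> real^'n^'n" where
  "ginv g s = matrix_inv (g s)"

definition chr2 :: "(real^'n \<Rightarrow> real^'n^'n) \<Rightarrow> 'n \<Rightarrow> 'n \<Rightarrow> 'n \<Rightarrow> real^'n \<Rightarrow> real" where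
  "chr2 g k i j s = (\<Sum>l\<in>UNIV. ginv g s $ k $ l * (1/2) *
      (pd i (\<lambda>x. g x $ j $ l) s + pd j (\<lambda>x. g x $ i $ l) s - pd l (\<lambda>x. g x $ i $ j) s))"

definition laplacian :: "(real^'n \<Rightarrow> real^'n^'n) \<Rightarrow> (real^'n \<Rightarrow> real) \<Rightarrow> real^'n \<Rightarrow> real" where
  "laplacian g f s = (\<Sum>i\<in>UNIV. \<Sum>j\<in>UNIV. ginv g s $ i $ j *
      (pd i (pd j f) s - (\<Sum>k\<in>UNIV. chr2 g k i j s * pd k f s)))"

definition ricci :: "(real^'n \<Rightarrow> real^'n^'n) \<Rightarrow> 'n \<Rightarrow> 'n \<Rightarrow> real^'n \<Rightarrow> real" where
  "ricci g i j s = (\<Sum>k\<in>UNIV. pd k (chr2 g k i j) s - pd j (chr2 g k i k) s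
      + (\<Sum>l\<in>UNIV. chr2 g k k l s * chr2 g l i j s - chr2 g k j l s * chr2 g l i k s))"

definition scalar_curv :: "(real^'n \<Rightarrow> real^'n^'n) \<Rightarrow> real^'n \<Rightarrow> real" where
  "scalar_curv g s = (\<Sum>i\<in>UNIV. \<Sum>j\<in>UNIV. ginv g s $ i $ j * ricci g i j s)"

definition tnormsq :: "(real^'n \<Rightarrow> real^'n^'n) \<Rightarrow> (real^'n \<Rightarrow> real^'n^'n) \<Rightarrow> real^'n \<Rightarrow> real" where
  "tnormsq g \<sigma> s = (\<Sum>i\<in>UNIV. \<Sum>j\<in>UNIV. \<Sum>k\<in>UNIV. \<Sum>l\<in>UNIV.
      ginv g s $ i $ k * ginv g s $ j $ l * \<sigma> s $ i $ j * \<sigma> s $ k $ l)"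

definition lich_solution :: "(real^'n \<Rightarrow> real^'n^'n) \<Rightarrow> (real^'n \<Rightarrow> real^'n^'n) \<Rightarrow> real
      \<Rightarrow> (real^'n \<Rightarrow> real) \<Rightarrow> bool" where
  "lich_solution g \<sigma> \<tau>0 \<phi> \<longleftrightarrow>
     (let n = CARD('n); q = q_exp n; \<kappa> = kappa n in
      periodic_fn \<phi> \<and> C2_fn \<phi> \<and> (\<forall>s. \<phi> s > 0) \<and>
      (\<forall>s. - 2 * \<kappa> * q * laplacian g \<phi> s + scalar_curv g s * \<phi> s
            - tnormsq g \<sigma> s * \<phi> s powr (- q - 1) + \<kappa> * \<tau>0\<^sup>2 * \<phi> s powr (q - 1) = 0))"

definition gen_metric :: "(real^'n \<Rightarrow> real^'n^'n) \<Rightarrow> (real^'n \<Rightarrow> real) \<Rightarrow> real^'n \<Rightarrow> real^'n^'n" where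
  "gen_metric g \<phi> s = (\<phi> s powr (q_exp CARD('n) - 2)) *\<^sub>R g s"

definition gen_sff :: "(real^'n \<Rightarrow> real^'n^'n) \<Rightarrow> (real^'n \<Rightarrow> real^'n^'n) \<Rightarrow> real
      \<Rightarrow> (real^'n \<Rightarrow> real) \<Rightarrow> real^'n \<Rightarrow> real^'n^'n" where
  "gen_sff g \<sigma> \<tau>0 \<phi> s = (\<phi> s powr (-2)) *\<^sub>R \<sigma> s + (\<tau>0 / real CARD('n)) *\<^sub>R gen_metric g \<phi> s"

definition g_len :: "('n \<Rightarrow> real) \<Rightarrow> real^'n \<Rightarrow> real^'n^'n" where
  "g_len l s = (\<chi> i j. if i = j then (l i)\<^sup>2 else 0)"

definition sigma_bl :: "('n \<Rightarrow> real) \<Rightarrow> ('n \<Rightarrow> real) \<Rightarrow> real^'n \<Rightarrow> real^'n^'n" where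
  "sigma_bl b l s = (\<chi> i j. if i = j then b i * (l i)\<^sup>2 else 0)"

definition offset_kasner :: "('n::finite \<Rightarrow> real) \<Rightarrow> bool" where
  "offset_kasner b \<longleftrightarrow> (\<Sum>k\<in>UNIV. b k) = 0 \<and> (\<Sum>k\<in>UNIV. (b k)\<^sup>2) = kappa CARD('n)"

definition kasner_exponents :: "('n::finite \<Rightarrow> real) \<Rightarrow> bool" where
  "kasner_exponents a \<longleftrightarrow> (\<Sum>k\<in>UNIV. a k) = 1 \<and> (\<Sum>k\<in>UNIV. (a k)\<^sup>2) = 1"

text \<open>Spacetime: coordinates (t, s); index None = t, Some k = s^k.
  Coordinate partial derivatives and Christoffel symbols of the first kind,
  christoffel1 G c a b = < d_c , nabla_{d_a} d_b > (Levi-Civita connection).\<close>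
definition st_pd :: "'n option \<Rightarrow> (real \<times> (real^'n) \<Rightarrow> real) \<Rightarrow> real \<times> (real^'n) \<Rightarrow> real" where
  "st_pd i F x = (case i of
      None \<Rightarrow> deriv (\<lambda>\<tau>. F (\<tau>, snd x)) (fst x)
    | Some k \<Rightarrow> deriv (\<lambda>h. F (fst x, snd x + h *\<^sub>R axis k 1)) 0)"

definition christoffel1 :: "('n option \<Rightarrow> 'n option \<Rightarrow> real \<times> (real^'n) \<Rightarrow> real)
      \<Rightarrow> 'n option \<Rightarrow> 'n option \<Rightarrow> 'n option \<Rightarrow> real \<times> (real^'n) \<Rightarrow> real" where
  "christoffel1 G c a b x = (1/2) * (st_pd a (G b c) x + st_pd b (G a c) x - st_pd c (G a b) x)"

definition kasner_G :: "('n \<Rightarrow> real) \<Rightarrow> ('n \<Rightarrow> real) \<Rightarrow> 'n option \<Rightarrow> 'n option \<Rightarrow> real \<times> (real^'n) \<Rightarrow> real" where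
  "kasner_G a lb i j x = (case (i, j) of
      (None, None) \<Rightarrow> -1
    | (Some k, Some m) \<Rightarrow> (if k = m then \<bar>fst x\<bar> powr (2 * a k) * (lb k)\<^sup>2 else 0)
    | _ \<Rightarrow> 0)"

text \<open>Cauchy data of the slice {t = t0}: induced metric and K(X,Y) = - < d_t, nabla_X Y >.\<close>
definition slice_metric :: "('n \<Rightarrow> real) \<Rightarrow> ('n \<Rightarrow> real) \<Rightarrow> real \<Rightarrow> real^'n \<Rightarrow> real^'n^'n" where
  "slice_metric a lb t0 s = (\<chi> k m. kasner_G a lb (Some k) (Some m) (t0, s))"

definition slice_sff :: "('n \<Rightarrow> real) \<Rightarrow> ('n \<Rightarrow> real) \<Rightarrow> real \<Rightarrow> real^'n \<Rightarrow> real^'n^'n" where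
  "slice_sff a lb t0 s = (\<chi> k m. - christoffel1 (kasner_G a lb) None (Some k) (Some m) (t0, s))"

end

theory Submission
  imports Defs
begin


lemma second_deriv_max:
  fixes f f' :: "real \<Rightarrow> real"
  assumes d1: "\<forall>h. (f has_real_derivative f' h) (at h)"
    and d2: "(f' has_real_derivative D) (at 0)"
    and mx: "\<forall>h. f h \<le> f 0"
  shows "D \<le> 0"
proof (rule ccontr)
  assume "\<not> D \<le> 0" hence D: "D > 0" by simp
  have "f' 0 = 0" using DERIV_local_max[OF d1[rule_format, of 0], of 1] mx by auto
  then obtain d where d: "d>0" "\<forall>h>0. h<d \<longrightarrow> 0 < f' h"
    using DERIV_pos_inc_right[OF d2 D] by auto
  obtain z where z: "0 < z" "z < d/2" "f (d/2) - f 0 = (d/2 - 0) * f' z"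
    using MVT2[of 0 "d/2" f f'] d1 d by auto
  have "f' z > 0" using d z by auto
  hence "(d/2) * f' z > 0" using d by simp
  moreover have "f (d/2) - f 0 = (d/2) * f' z" using z(3) by simp
  ultimately show False using mx by (metis diff_gt_0_iff_gt not_le)
qed

lemma second_deriv_min:
  fixes f f' :: "real \<Rightarrow> real"
  assumes d1: "\<forall>h. (f has_real_derivative f' h) (at h)"
    and d2: "(f' has_real_derivative D) (at 0)"
    and mn: "\<forall>h. f 0 \<le> f h"
  shows "D \<ge> 0"
proof (rule ccontr)
  assume "\<not> D \<ge> 0" hence D: "D < 0" by simp
  have "f' 0 = 0" using DERIV_local_min[OF d1[rule_format, of 0], of 1] mn by auto
  then obtain d where d: "d>0" "\<forall>h>0. h<d \<longrightarrow> 0 > f' h"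
    using DERIV_neg_dec_right[OF d2 D] by auto
  obtain z where z: "0 < z" "z < d/2" "f (d/2) - f 0 = (d/2 - 0) * f' z"
    using MVT2[of 0 "d/2" f f'] d1 d by auto
  have "f' z < 0" using d z by auto
  hence "(d/2) * f' z < 0" using d by (simp add: mult_pos_neg)
  moreover have "f (d/2) - f 0 = (d/2) * f' z" using z(3) by simp
  ultimately show False using mn by (metis diff_less_0_iff_less not_le)
qed

lemma pd_line:
  assumes "has_pd k \<phi>"
  shows "((\<lambda>h. \<phi> (s0 + h *\<^sub>R axis k 1)) has_real_derivative pd k \<phi> (s0 + h *\<^sub>R axis k 1)) (at h)"
proof -
  have "(\<lambda>x. \<phi> ((s0 + h *\<^sub>R axis k 1) + x *\<^sub>R axis k 1)) differentiable (at 0)"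
    using assms unfolding has_pd_def by blast
  hence "((\<lambda>x. \<phi> ((s0 + h *\<^sub>R axis k 1) + x *\<^sub>R axis k 1)) has_real_derivative pd k \<phi> (s0 + h *\<^sub>R axis k 1)) (at 0)"
    unfolding pd_def using DERIV_deriv_iff_real_differentiable by blast
  moreover have "(\<lambda>x. \<phi> ((s0 + h *\<^sub>R axis k 1) + x *\<^sub>R axis k 1)) = (\<lambda>x. (\<lambda>h. \<phi> (s0 + h *\<^sub>R axis k 1)) (x + h))"
    by (simp add: scaleR_add_left algebra_simps)
  ultimately show ?thesis using DERIV_shift[of "\<lambda>h. \<phi> (s0 + h *\<^sub>R axis k 1)" _ 0 h] by simp
qed

lemma pd2_max:
  assumes "C2_fn \<phi>" "\<forall>s. \<phi> s \<le> \<phi> s0"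
  shows "pd k (pd k \<phi>) s0 \<le> 0"
proof -
  have h1: "has_pd k \<phi>" "has_pd k (pd k \<phi>)" using assms(1) unfolding C2_fn_def by auto
  have "(\<lambda>h. pd k \<phi> (s0 + h *\<^sub>R axis k 1)) differentiable (at 0)"
    using h1(2) unfolding has_pd_def by blast
  hence d2: "((\<lambda>h. pd k \<phi> (s0 + h *\<^sub>R axis k 1)) has_real_derivative pd k (pd k \<phi>) s0) (at 0)"
    unfolding pd_def[of k "pd k \<phi>"] using DERIV_deriv_iff_real_differentiable by blast
  show ?thesis
    by (rule second_deriv_max[of "\<lambda>h. \<phi> (s0 + h *\<^sub>R axis k 1)" "\<lambda>h. pd k \<phi> (s0 + h *\<^sub>R axis k 1)", OF _ d2]) (use pd_line[OF h1(1)] assms(2) in auto)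
qed

lemma pd2_min:
  assumes "C2_fn \<phi>" "\<forall>s. \<phi> s0 \<le> \<phi> s"
  shows "pd k (pd k \<phi>) s0 \<ge> 0"
proof -
  have h1: "has_pd k \<phi>" "has_pd k (pd k \<phi>)" using assms(1) unfolding C2_fn_def by auto
  have "(\<lambda>h. pd k \<phi> (s0 + h *\<^sub>R axis k 1)) differentiable (at 0)"
    using h1(2) unfolding has_pd_def by blast
  hence d2: "((\<lambda>h. pd k \<phi> (s0 + h *\<^sub>R axis k 1)) has_real_derivative pd k (pd k \<phi>) s0) (at 0)"
    unfolding pd_def[of k "pd k \<phi>"] using DERIV_deriv_iff_real_differentiable by blast
  show ?thesis
    by (rule second_deriv_min[of "\<lambda>h. \<phi> (s0 + h *\<^sub>R axis k 1)" "\<lambda>h. pd k \<phi> (s0 + h *\<^sub>R axis k 1)", OF _ d2]) (use pd_line[OF h1(1)] assms(2) in auto)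
qed

lemma periodic_int:
  assumes "periodic_fn \<phi>"
  shows "\<phi> (s + of_int m *\<^sub>R axis k 1) = \<phi> s"
proof -
  have P: "\<And>x. \<phi> (x + axis k 1) = \<phi> x" using assms unfolding periodic_fn_def by blast
  have pos: "\<phi> (s + real n *\<^sub>R axis k 1) = \<phi> s" for n s
  proof (induction n)
    case (Suc n)
    have eq: "s + real (Suc n) *\<^sub>R axis k 1 = (s + real n *\<^sub>R axis k 1) + axis k 1"
      by (simp add: algebra_simps)
    show ?case using P[of "s + real n *\<^sub>R axis k 1"] Suc eq by metis
  qed simp
  show ?thesis
  proof (cases "m \<ge> 0")
    case True
    then obtain n where "m = int n" using nonneg_eq_int by blast
    thus ?thesis using pos by simp
  next
    case False
    then obtain n where n: "m = - int n" by (metis le_cases minus_minus neg_0_le_iff_le nonneg_eq_int)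
    have "\<phi> s = \<phi> ((s + of_int m *\<^sub>R axis k 1) + real n *\<^sub>R axis k 1)" by (simp add: n)
    thus ?thesis using pos by simp
  qed
qed

lemma periodic_sum:
  assumes "periodic_fn \<phi>" "finite F"
  shows "\<phi> (s + (\<Sum>k\<in>F. of_int (m k) *\<^sub>R axis k 1)) = \<phi> s"
  using assms(2)
proof (induction F rule: finite_induct)
  case (insert x F)
  have "s + (\<Sum>k\<in>insert x F. of_int (m k) *\<^sub>R axis k 1)
       = (s + (\<Sum>k\<in>F. of_int (m k) *\<^sub>R axis k 1)) + of_int (m x) *\<^sub>R axis x 1"
    using insert by (simp add: algebra_simps)
  hence "\<phi> (s + (\<Sum>k\<in>insert x F. of_int (m k) *\<^sub>R axis k 1))
       = \<phi> ((s + (\<Sum>k\<in>F. of_int (m k) *\<^sub>R axis k 1)) + of_int (m x) *\<^sub>R axis x 1)"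
    by (rule arg_cong)
  also have "\<dots> = \<phi> (s + (\<Sum>k\<in>F. of_int (m k) *\<^sub>R axis k 1))"
    by (rule periodic_int[OF assms(1)])
  finally show ?case using insert.IH by simp
qed simp

lemma periodic_reduce:
  fixes \<phi> :: "real^'n::finite \<Rightarrow> 'b"
  assumes "periodic_fn \<phi>"
  shows "\<phi> s = \<phi> (\<chi> k. frac (s$k))"
proof -
  have c: "(\<Sum>k\<in>UNIV. of_int (\<lfloor>s$k\<rfloor>) *\<^sub>R axis k (1::real)) $ i = (of_int \<lfloor>s$i\<rfloor> :: real)" for i
  proof -
    have m: "\<And>(r::real) P. r * (if P then 1 else 0) = (if P then r else 0)" by simp
    show ?thesis by (simp add: axis_def m)
  qed
  have eq: "s = (\<chi> k. frac (s$k)) + (\<Sum>k\<in>UNIV. of_int (\<lfloor>s$k\<rfloor>) *\<^sub>R axis k 1)"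
    unfolding vec_eq_iff using c by (simp add: frac_def)
  have "\<phi> s = \<phi> ((\<chi> k. frac (s$k)) + (\<Sum>k\<in>UNIV. of_int (\<lfloor>s$k\<rfloor>) *\<^sub>R axis k 1))"
    using eq by (rule arg_cong)
  also have "\<dots> = \<phi> (\<chi> k. frac (s$k))" by (rule periodic_sum[OF assms]) simp
  finally show ?thesis .
qed

lemma periodic_max:
  fixes \<phi> :: "real^'n::finite \<Rightarrow> real"
  assumes "periodic_fn \<phi>" "continuous_on UNIV \<phi>"
  shows "\<exists>s0. \<forall>s. \<phi> s \<le> \<phi> s0"
proof -
  have "(0::real^'n) \<in> cbox 0 1" by (simp add: mem_box_cart)
  hence ne: "cbox (0::real^'n) 1 \<noteq> {}" by blast
  obtain s0 where s0: "\<forall>y\<in>cbox 0 1. \<phi> y \<le> \<phi> s0"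
    using continuous_attains_sup[OF compact_cbox ne continuous_on_subset[OF assms(2) subset_UNIV]] by auto
  have "\<phi> s \<le> \<phi> s0" for s
  proof -
    have "(\<chi> k. frac (s$k)) \<in> cbox 0 1" by (simp add: mem_box_cart frac_lt_1 less_imp_le)
    thus ?thesis using s0 periodic_reduce[OF assms(1), of s] by simp
  qed
  thus ?thesis by blast
qed


lemma ifz1: "(if P then (a::real) else 0) * b = (if P then a*b else 0)" by simp
lemma ifz2: "(a::real) * (if P then b else 0) = (if P then a*b else 0)" by simp

lemma pd_const: "pd k (\<lambda>x. C) = (\<lambda>s. 0)"
  by (simp add: pd_def fun_eq_iff)

lemma matrix_inv_unique:
  fixes A B :: "real^'n^'n"
  assumes AB: "A ** B = mat 1" "B ** A = mat 1"
  shows "matrix_inv A = B"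
proof -
  have h: "A ** matrix_inv A = mat 1 \<and> matrix_inv A ** A = mat 1"
    unfolding matrix_inv_def by (rule someI[of _ B]) (use AB in blast)
  have "matrix_inv A = matrix_inv A ** (A ** B)" using AB by (simp add: matrix_mul_rid)
  also have "\<dots> = (matrix_inv A ** A) ** B" by (simp add: matrix_mul_assoc)
  also have "\<dots> = B" using h by (simp add: matrix_mul_lid)
  finally show ?thesis .
qed

lemma ginv_g_len:
  fixes l :: "'n::finite \<Rightarrow> real"
  assumes "\<forall>k. l k \<noteq> 0"
  shows "ginv (g_len l) s = (\<chi> i j. if i = j then 1/(l i)^2 else 0)"
  unfolding ginv_def
  by (rule matrix_inv_unique)
     (use assms in \<open>simp_all add: vec_eq_iff matrix_matrix_mult_def mat_def g_len_def ifz1 ifz2\<close>)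

lemma ginv_g_len_apply:
  fixes l :: "'n::finite \<Rightarrow> real"
  assumes "\<forall>k. l k \<noteq> 0"
  shows "ginv (g_len l) s $ i $ j = (if i = j then 1/(l i)^2 else 0)"
  using ginv_g_len[OF assms] by simp

lemma chr2_g_len: "chr2 (g_len l) k i j = (\<lambda>s. 0)"
  by (simp add: chr2_def g_len_def pd_const fun_eq_iff)

lemma scalar_curv_g_len: "scalar_curv (g_len l) s = 0"
  by (simp add: scalar_curv_def ricci_def chr2_g_len pd_const)

lemma laplacian_g_len:
  fixes l :: "'n::finite \<Rightarrow> real"
  assumes "\<forall>k. l k \<noteq> 0"
  shows "laplacian (g_len l) f s = (\<Sum>i\<in>UNIV. pd i (pd i f) s / (l i)^2)"
  using assms by (simp add: laplacian_def chr2_g_len ginv_g_len_apply ifz1 ifz2)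

lemma tnormsq_g_len:
  fixes l b :: "'n::finite \<Rightarrow> real"
  assumes "\<forall>k. l k \<noteq> 0"
  shows "tnormsq (g_len l) (\<lambda>s. \<mu> *\<^sub>R sigma_bl b l s) s = \<mu>^2 * (\<Sum>k\<in>UNIV. (b k)^2)"
proof -
  let ?G = "ginv (g_len l) s" and ?S = "\<mu> *\<^sub>R sigma_bl b l s"
  have e1: "(\<Sum>m\<in>UNIV. ?G $ i $ k * ?G $ j $ m * ?S $ i $ j * ?S $ k $ m)
      = (if i = k \<and> j = k then (\<mu> * b i)^2 else 0)" for i j k
  proof (cases "i = k \<and> j = k")
    case True
    have "(\<Sum>m\<in>UNIV. ?G $ i $ k * ?G $ j $ m * ?S $ i $ j * ?S $ k $ m)
       = 1/(l i)^2 * (1/(l i)^2) * (\<mu> * (b i * (l i)^2)) * (\<mu> * (b i * (l i)^2))"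
      using assms True by (simp add: ginv_g_len_apply sigma_bl_def ifz1 ifz2)
    also have "\<dots> = (\<mu> * b i)^2" using assms by (simp add: field_simps power2_eq_square)
    finally show ?thesis using True by simp
  next
    case False
    thus ?thesis using assms by (auto simp: ginv_g_len_apply sigma_bl_def)
  qed
  have e2: "(\<Sum>k\<in>UNIV. (if i = k \<and> j = k then (\<mu> * b i)^2 else 0)) = (if i = j then (\<mu> * b i)^2 else 0)" for i j
  proof (cases "i = j")
    case True thus ?thesis by simp
  next
    case False thus ?thesis by (auto intro!: sum.neutral)
  qed
  have "tnormsq (g_len l) (\<lambda>s. \<mu> *\<^sub>R sigma_bl b l s) s = (\<Sum>i\<in>UNIV. (\<mu> * b i)^2)"
    unfolding tnormsq_def using e1 e2 by simp
  thus ?thesis by (simp add: sum_distrib_left power_mult_distrib)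
qed

lemma deriv_abs_powr:
  fixes t p :: real
  assumes "t \<noteq> 0"
  shows "((\<lambda>\<tau>. \<bar>\<tau>\<bar> powr p) has_real_derivative p * \<bar>t\<bar> powr p / t) (at t)"
proof (cases "t > 0")
  case True
  have ev: "eventually (\<lambda>\<tau>. \<tau> \<in> {0<..}) (nhds t)"
    using True by (intro eventually_nhds_in_open) auto
  have ev2: "eventually (\<lambda>\<tau>. \<bar>\<tau>\<bar> powr p = \<tau> powr p) (nhds t)"
    using ev by eventually_elim auto
  have "((\<lambda>\<tau>. \<tau> powr p) has_real_derivative p * t powr (p - 1)) (at t)"
    using has_real_derivative_powr[OF True] .
  moreover have "p * t powr (p - 1) = p * \<bar>t\<bar> powr p / t" using True by (simp add: powr_diff)
  ultimately show ?thesis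
    using DERIV_cong_ev[OF refl ev2 refl] by simp
next
  case False
  hence neg: "t < 0" using assms by simp
  have ev: "eventually (\<lambda>\<tau>. \<tau> \<in> {..<0}) (nhds t)"
    using neg by (intro eventually_nhds_in_open) auto
  have ev2: "eventually (\<lambda>\<tau>. \<bar>\<tau>\<bar> powr p = (- \<tau>) powr p) (nhds t)"
    using ev by eventually_elim auto
  have d: "((\<lambda>\<tau>. - \<tau>) has_real_derivative -1) (at t)"
    by (auto intro!: derivative_eq_intros)
  have "((\<lambda>\<tau>. (- \<tau>) powr p) has_real_derivative p * (- t) powr (p - of_nat 1) * (-1)) (at t)"
    using DERIV_fun_powr[OF d] neg by simp
  moreover have "p * (- t) powr (p - of_nat 1) * (-1) = p * \<bar>t\<bar> powr p / t" using neg
    by (simp add: powr_diff)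
  ultimately show ?thesis
    using DERIV_cong_ev[OF refl ev2 refl] by simp
qed

lemma slice_sff_apply:
  fixes a lb :: "'n::finite \<Rightarrow> real"
  assumes "t0 \<noteq> 0"
  shows "slice_sff a lb t0 s $ k $ m = (if k = m then a k * \<bar>t0\<bar> powr (2 * a k) * (lb k)^2 / t0 else 0)"
proof -
  have z: "kasner_G a lb (Some m) None = (\<lambda>x. 0)" for m by (simp add: kasner_G_def fun_eq_iff)
  have "st_pd None (kasner_G a lb (Some k) (Some m)) (t0, s)
        = (if k = m then 2 * a k * \<bar>t0\<bar> powr (2 * a k) / t0 * (lb k)^2 else 0)"
  proof (cases "k = m")
    case True
    have "((\<lambda>\<tau>. \<bar>\<tau>\<bar> powr (2 * a k) * (lb k)^2) has_real_derivative
          2 * a k * \<bar>t0\<bar> powr (2 * a k) / t0 * (lb k)^2) (at t0)"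
      by (rule DERIV_cmult_right[OF deriv_abs_powr[OF assms]])
    hence "deriv (\<lambda>\<tau>. \<bar>\<tau>\<bar> powr (2 * a k) * (lb k)^2) t0 = 2 * a k * \<bar>t0\<bar> powr (2 * a k) / t0 * (lb k)^2"
      by (rule DERIV_imp_deriv)
    thus ?thesis using True by (simp add: st_pd_def kasner_G_def)
  next
    case False
    thus ?thesis by (simp add: st_pd_def kasner_G_def)
  qed
  thus ?thesis
    by (simp add: slice_sff_def christoffel1_def z st_pd_def)
qed


lemma periodic_min:
  fixes \<phi> :: "real^'n::finite \<Rightarrow> real"
  assumes "periodic_fn \<phi>" "continuous_on UNIV \<phi>"
  shows "\<exists>s0. \<forall>s. \<phi> s0 \<le> \<phi> s"
proof -
  have "periodic_fn (\<lambda>s. - \<phi> s)" using assms(1) unfolding periodic_fn_def by simp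
  moreover have "continuous_on UNIV (\<lambda>s. - \<phi> s)" using assms(2) by (intro continuous_intros)
  ultimately obtain s0 where "\<forall>s. - \<phi> s \<le> - \<phi> s0" using periodic_max by blast
  thus ?thesis by auto
qed

lemma powr_sq: "(x::real) > 0 \<Longrightarrow> (x powr y)^2 = x powr (2*y)"
proof -
  have e: "y + y = 2*y" by simp
  have "x powr (y+y) = x powr y * x powr y" by (rule powr_add)
  thus ?thesis unfolding e by (simp add: power2_eq_square)
qed

lemma key_num:
  fixes x c q \<kappa> \<tau> \<mu> L :: real
  assumes x: "x > 0" and c: "c > 0" and q: "q > 0" and k: "\<kappa> > 0" and t: "\<tau> \<noteq> 0"
    and cq: "\<tau>^2 * c powr (2*q) = \<mu>^2"
    and eq: "-2*\<kappa>*q*L - \<mu>^2*\<kappa> * x powr (-q-1) + \<kappa>*\<tau>^2 * x powr (q-1) = 0"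
  shows "(L \<le> 0 \<longrightarrow> x \<le> c) \<and> (L \<ge> 0 \<longrightarrow> c \<le> x)"
proof -
  have e1: "(q-1)+(q+1) = 2*q" by simp
  have "x powr ((q-1)+(q+1)) = x powr (q-1) * x powr (q+1)" by (rule powr_add)
  hence m1: "x powr (q-1) * x powr (q+1) = x powr (2*q)" unfolding e1 by simp
  have e2: "(-q-1)+(q+1) = 0" by simp
  have "x powr ((-q-1)+(q+1)) = x powr (-q-1) * x powr (q+1)" by (rule powr_add)
  hence m2: "x powr (-q-1) * x powr (q+1) = 1" unfolding e2 using x by simp
  have "(-2*\<kappa>*q*L - \<mu>^2*\<kappa> * x powr (-q-1) + \<kappa>*\<tau>^2 * x powr (q-1)) * x powr (q+1) = 0"
    using eq by simp
  hence "-2*\<kappa>*q*L*x powr (q+1) - \<mu>^2*\<kappa> * (x powr (-q-1) * x powr (q+1)) + \<kappa>*\<tau>^2 * (x powr (q-1) * x powr (q+1)) = 0"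
    by (simp add: algebra_simps)
  hence "\<kappa> * (\<tau>^2 * x powr (2*q) - \<mu>^2 - 2*q*L*x powr (q+1)) = 0"
    unfolding m1 m2 by (simp add: algebra_simps)
  hence D: "\<tau>^2 * x powr (2*q) - \<tau>^2 * c powr (2*q) = 2*q*L*x powr (q+1)"
    using k cq by simp
  have xp: "x powr (q+1) > 0" using x by simp
  have t2: "\<tau>^2 > 0" using t by simp
  have q2: "2*q > 0" using q by simp
  show ?thesis
  proof (intro conjI impI)
    assume "L \<le> 0"
    hence "2*q*L*x powr (q+1) \<le> 0" using q xp by (simp add: mult_nonpos_nonneg)
    hence "\<tau>^2 * (x powr (2*q) - c powr (2*q)) \<le> 0" using D by (simp add: algebra_simps)
    hence le: "x powr (2*q) \<le> c powr (2*q)" using t2 by (simp add: mult_le_0_iff)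
    show "x \<le> c"
    proof (rule ccontr)
      assume "\<not> x \<le> c"
      hence "c powr (2*q) < x powr (2*q)" using c q2 by (intro powr_less_mono2) auto
      thus False using le by simp
    qed
  next
    assume "L \<ge> 0"
    hence "2*q*L*x powr (q+1) \<ge> 0" using q xp by simp
    hence "\<tau>^2 * (x powr (2*q) - c powr (2*q)) \<ge> 0" using D by (simp add: algebra_simps)
    hence le: "x powr (2*q) \<ge> c powr (2*q)" using t2 by (simp add: zero_le_mult_iff)
    show "c \<le> x"
    proof (rule ccontr)
      assume "\<not> c \<le> x"
      hence "x powr (2*q) < c powr (2*q)" using x q2 by (intro powr_less_mono2) auto
      thus False using le by simp
    qed
  qed
qed

theorem proposition4p1:
  fixes l b :: "'n::finite \<Rightarrow> real" and \<mu> \<tau>0 :: real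
  assumes "CARD('n) \<ge> 3"
    and "\<forall>k. l k > 0"
    and "offset_kasner b"
    and "\<mu> \<noteq> 0" and "\<tau>0 \<noteq> 0"
  shows "let n = CARD('n); q = q_exp n; t0 = 1 / \<tau>0;
             sg = (if (\<mu> > 0 \<longleftrightarrow> \<tau>0 > 0) then 1 else -1 :: real);
             a = (\<lambda>k. sg * b k + 1 / real n);
             c = \<bar>\<mu> / \<tau>0\<bar> powr (1 / q);
             lb = (\<lambda>k. \<bar>t0\<bar> powr (- a k) * c powr (q / 2 - 1) * l k);
             g = g_len l; \<sigma> = (\<lambda>s. \<mu> *\<^sub>R sigma_bl b l s)
         in kasner_exponents a \<and> (\<forall>k. lb k > 0)
          \<and> (\<tau>0 > 0 \<longrightarrow> t0 > 0) \<and> (\<tau>0 < 0 \<longrightarrow> t0 < 0)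
          \<and> (\<exists>!\<phi>. lich_solution g \<sigma> \<tau>0 \<phi>)
          \<and> (\<forall>\<phi>. lich_solution g \<sigma> \<tau>0 \<phi> \<longrightarrow>
                 gen_metric g \<phi> = slice_metric a lb t0 \<and>
                 gen_sff g \<sigma> \<tau>0 \<phi> = slice_sff a lb t0)
          \<and> slice_metric a lb t0 = (\<lambda>s. (c powr (q - 2)) *\<^sub>R g s)
          \<and> slice_metric a lb (sgn t0) = g_len lb"
proof -
  define n where "n = CARD('n)"
  define q where "q = q_exp n"
  define t0 where "t0 = 1 / \<tau>0"
  define sg :: real where "sg = (if (\<mu> > 0 \<longleftrightarrow> \<tau>0 > 0) then 1 else -1)"
  define a where "a = (\<lambda>k. sg * b k + 1 / real n)"
  define c where "c = \<bar>\<mu> / \<tau>0\<bar> powr (1 / q)"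
  define lb where "lb = (\<lambda>k. \<bar>t0\<bar> powr (- a k) * c powr (q / 2 - 1) * l k)"
  define g where "g = g_len l"
  define \<sigma> where "\<sigma> = (\<lambda>s. \<mu> *\<^sub>R sigma_bl b l s)"
  define \<kappa> where "\<kappa> = kappa n"
  have n3: "real n \<ge> 3" using assms(1) n_def by simp
  have qv: "q = 2 * real n / (real n - 2)" by (simp add: q_def q_exp_def)
  have qpos: "q > 0" using n3 qv by simp
  have kv: "\<kappa> = (real n - 1) / real n" by (simp add: \<kappa>_def kappa_def)
  have kpos: "\<kappa> > 0" using n3 kv by simp
  have sb: "(\<Sum>k\<in>UNIV. b k) = 0" and sb2: "(\<Sum>k\<in>UNIV. (b k)^2) = \<kappa>"
    using assms(3) by (simp_all add: offset_kasner_def \<kappa>_def n_def)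
  have cardn: "card (UNIV::'n set) = n" by (simp add: n_def)
  have lnz: "\<forall>k. l k \<noteq> 0" using assms(2) by (metis less_irrefl)
  have t0nz: "t0 \<noteq> 0" using assms(5) by (simp add: t0_def)
  have at0: "\<bar>t0\<bar> > 0" using t0nz by simp
  have mt: "\<bar>\<mu> / \<tau>0\<bar> > 0" using assms(4,5) by simp
  have cpos: "c > 0" unfolding c_def using mt by (simp only: powr_gt_zero)
  have cq: "c powr q = \<bar>\<mu> / \<tau>0\<bar>"
  proof -
    have "c powr q = \<bar>\<mu> / \<tau>0\<bar> powr (1/q * q)" unfolding c_def by (rule powr_powr)
    also have "1/q * q = 1" using qpos by simp
    finally show ?thesis by simp
  qed
  have c2q: "\<tau>0^2 * c powr (2*q) = \<mu>^2"
  proof -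
    have "c powr (2*q) = (c powr q)^2" using cpos by (simp add: powr_sq)
    thus ?thesis using cq assms(5) by (simp add: power_divide)
  qed
  have sgeq: "sg * \<tau>0 * \<bar>\<mu> / \<tau>0\<bar> = \<mu>"
    using assms(4,5) by (auto simp: sg_def abs_if field_simps)
  have sg2: "sg^2 = 1" by (simp add: sg_def)
  have lich_iff: "lich_solution g \<sigma> \<tau>0 \<phi> \<longleftrightarrow> periodic_fn \<phi> \<and> C2_fn \<phi> \<and> (\<forall>s. \<phi> s > 0) \<and>
     (\<forall>s. -2*\<kappa>*q*(\<Sum>i\<in>UNIV. pd i (pd i \<phi>) s / (l i)^2) - \<mu>^2*\<kappa> * \<phi> s powr (-q-1)
          + \<kappa>*\<tau>0^2 * \<phi> s powr (q-1) = 0)" for \<phi>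
    unfolding lich_solution_def Let_def g_def \<sigma>_def
    by (simp add: n_def q_def \<kappa>_def scalar_curv_g_len laplacian_g_len[OF lnz] tnormsq_g_len[OF lnz] sb2)
  have const_sol: "lich_solution g \<sigma> \<tau>0 (\<lambda>s. c)"
  proof -
    have C2: "C2_fn (\<lambda>s::real^'n. c)"
      by (simp add: C2_fn_def has_pd_def pd_const)
    have "c powr (q-1) = c powr (2*q) * c powr (-q-1)"
    proof -
      have "(2*q) + (-q-1) = q - 1" by simp
      thus ?thesis by (metis powr_add)
    qed
    hence "\<kappa>*\<tau>0^2 * c powr (q-1) = \<mu>^2*\<kappa> * c powr (-q-1)"
      using c2q by (simp add: algebra_simps)
    thus ?thesis unfolding lich_iff using C2 cpos
      by (simp add: periodic_fn_def pd_const)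
  qed
  have uniq: "\<phi> = (\<lambda>s. c)" if sol: "lich_solution g \<sigma> \<tau>0 \<phi>" for \<phi>
  proof -
    have per: "periodic_fn \<phi>" and C2: "C2_fn \<phi>" and pos: "\<forall>s. \<phi> s > 0"
      and eq: "\<forall>s. -2*\<kappa>*q*(\<Sum>i\<in>UNIV. pd i (pd i \<phi>) s / (l i)^2) - \<mu>^2*\<kappa> * \<phi> s powr (-q-1)
          + \<kappa>*\<tau>0^2 * \<phi> s powr (q-1) = 0"
      using sol unfolding lich_iff by auto
    have cont: "continuous_on UNIV \<phi>" using C2 by (simp add: C2_fn_def)
    obtain s1 where s1: "\<forall>s. \<phi> s \<le> \<phi> s1" using periodic_max[OF per cont] by blast
    obtain s2 where s2: "\<forall>s. \<phi> s2 \<le> \<phi> s" using periodic_min[OF per cont] by blast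
    have L1: "(\<Sum>i\<in>UNIV. pd i (pd i \<phi>) s1 / (l i)^2) \<le> 0"
      by (intro sum_nonpos divide_nonpos_nonneg pd2_max[OF C2 s1]) simp
    have L2: "(\<Sum>i\<in>UNIV. pd i (pd i \<phi>) s2 / (l i)^2) \<ge> 0"
      by (intro sum_nonneg divide_nonneg_nonneg pd2_min[OF C2 s2]) simp
    have "\<phi> s1 \<le> c"
      using key_num[OF pos[rule_format] cpos qpos kpos assms(5) c2q eq[rule_format, of s1]] L1 by blast
    moreover have "c \<le> \<phi> s2"
      using key_num[OF pos[rule_format] cpos qpos kpos assms(5) c2q eq[rule_format, of s2]] L2 by blast
    ultimately show ?thesis using s1 s2 by (auto intro!: ext intro: order_antisym order_trans)
  qed
  have lb2: "(lb k)^2 = \<bar>t0\<bar> powr (- 2 * a k) * c powr (q - 2) * (l k)^2" for k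
  proof -
    have "(lb k)^2 = (\<bar>t0\<bar> powr (- a k))^2 * (c powr (q / 2 - 1))^2 * (l k)^2"
      by (simp add: lb_def power_mult_distrib)
    also have "\<dots> = \<bar>t0\<bar> powr (- 2 * a k) * c powr (q - 2) * (l k)^2"
      using at0 cpos by (simp add: powr_sq algebra_simps)
    finally show ?thesis .
  qed
  have tt: "\<bar>t0\<bar> powr (2 * a k) * \<bar>t0\<bar> powr (- 2 * a k) = 1" for k
    using at0 by (simp add: powr_add[symmetric])
  have pk: "\<bar>t0\<bar> powr (2 * a k) * (lb k)^2 = c powr (q - 2) * (l k)^2" for k
    using tt[of k] by (simp add: lb2 mult.assoc[symmetric])
  have sm: "slice_metric a lb t0 s $ k $ m = (if k = m then c powr (q - 2) * (l k)^2 else 0)" for s k m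
  proof -
    have "slice_metric a lb t0 s $ k $ m = (if k = m then \<bar>t0\<bar> powr (2 * a k) * (lb k)^2 else 0)"
      by (simp add: slice_metric_def kasner_G_def)
    also have "\<dots> = (if k = m then c powr (q - 2) * (l k)^2 else 0)"
      using pk by simp
    finally show ?thesis .
  qed
  have SM: "slice_metric a lb t0 = (\<lambda>s. (c powr (q - 2)) *\<^sub>R g s)"
    by (auto simp: fun_eq_iff vec_eq_iff sm g_def g_len_def)
  have SM1: "slice_metric a lb (sgn t0) = g_len lb"
    using t0nz by (auto simp: fun_eq_iff vec_eq_iff slice_metric_def kasner_G_def g_len_def abs_sgn)
  have GM: "gen_metric g (\<lambda>s. c) = slice_metric a lb t0"
    using SM by (simp add: gen_metric_def fun_eq_iff n_def q_def)
  have key_sff: "c powr (-2) * \<mu> = sg * \<tau>0 * c powr (q-2)"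
  proof -
    have "c powr (q-2) = c powr q * c powr (-2)" by (simp add: powr_add[symmetric])
    hence "sg * \<tau>0 * c powr (q-2) = (sg * \<tau>0 * \<bar>\<mu> / \<tau>0\<bar>) * c powr (-2)"
      unfolding cq by (simp only: mult.assoc)
    thus ?thesis unfolding sgeq by simp
  qed
  have GS: "gen_sff g \<sigma> \<tau>0 (\<lambda>s. c) = slice_sff a lb t0"
  proof (intro ext)
    fix s
    show "gen_sff g \<sigma> \<tau>0 (\<lambda>s. c) s = slice_sff a lb t0 s"
    proof (simp add: vec_eq_iff, intro allI)
      fix k m
      have "slice_sff a lb t0 s $ k $ m = (if k = m then a k * (\<bar>t0\<bar> powr (2 * a k) * (lb k)^2) / t0 else 0)"
        by (simp add: slice_sff_apply[OF t0nz] mult.assoc)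
      also have "\<dots> = (if k = m then a k * (c powr (q - 2) * (l k)^2) * \<tau>0 else 0)"
        using pk by (simp add: t0_def)
      finally have R: "slice_sff a lb t0 s $ k $ m = (if k = m then a k * (c powr (q - 2) * (l k)^2) * \<tau>0 else 0)" .
      have Lh: "gen_sff g \<sigma> \<tau>0 (\<lambda>s. c) s $ k $ m
          = (if k = m then c powr (-2) * \<mu> * b k * (l k)^2 + \<tau>0 / real n * (c powr (q-2) * (l k)^2) else 0)"
        by (simp add: gen_sff_def gen_metric_def g_def \<sigma>_def sigma_bl_def g_len_def n_def q_def)
      show "gen_sff g \<sigma> \<tau>0 (\<lambda>s. c) s $ k $ m = slice_sff a lb t0 s $ k $ m"
        unfolding Lh R key_sff by (simp add: a_def algebra_simps)
    qed
  qed
  have KE: "kasner_exponents a"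
  proof -
    have s1: "(\<Sum>k\<in>UNIV. a k) = 1"
      using n3 by (simp add: a_def sum.distrib sum_distrib_left[symmetric] sb cardn)
    have e: "(a k)^2 = sg^2 * (b k)^2 + (2 * sg/real n) * b k + 1/(real n)^2" for k
      using n3 by (simp add: a_def power2_eq_square field_simps)
    have "(\<Sum>k\<in>UNIV. (a k)^2) = sg^2 * (\<Sum>k\<in>UNIV. (b k)^2) + (2 * sg/real n) * (\<Sum>k\<in>UNIV. b k) + real n * (1/(real n)^2)"
      unfolding e by (simp add: sum.distrib sum_distrib_left cardn)
    also have "\<dots> = \<kappa> + real n * (1/(real n)^2)" by (simp add: sg2 sb sb2)
    also have "\<dots> = 1" using n3 by (simp add: kv power2_eq_square field_simps)
    finally show ?thesis using s1 by (simp add: kasner_exponents_def)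
  qed
  have LB: "\<forall>k. lb k > 0" using at0 cpos assms(2) by (simp add: lb_def)
  have main: "kasner_exponents a \<and> (\<forall>k. lb k > 0)
          \<and> (\<tau>0 > 0 \<longrightarrow> t0 > 0) \<and> (\<tau>0 < 0 \<longrightarrow> t0 < 0)
          \<and> (\<exists>!\<phi>. lich_solution g \<sigma> \<tau>0 \<phi>)
          \<and> (\<forall>\<phi>. lich_solution g \<sigma> \<tau>0 \<phi> \<longrightarrow>
                 gen_metric g \<phi> = slice_metric a lb t0 \<and>
                 gen_sff g \<sigma> \<tau>0 \<phi> = slice_sff a lb t0)
          \<and> slice_metric a lb t0 = (\<lambda>s. (c powr (q - 2)) *\<^sub>R g s)
          \<and> slice_metric a lb (sgn t0) = g_len lb"
  proof (intro conjI)
    show "kasner_exponents a" by (rule KE)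
    show "\<forall>k. lb k > 0" by (rule LB)
    show "\<tau>0 > 0 \<longrightarrow> t0 > 0" by (simp add: t0_def)
    show "\<tau>0 < 0 \<longrightarrow> t0 < 0" by (simp add: t0_def)
    show "\<exists>!\<phi>. lich_solution g \<sigma> \<tau>0 \<phi>" by (rule ex1I[of "lich_solution g \<sigma> \<tau>0" "\<lambda>s. c", OF const_sol uniq])
    show "\<forall>\<phi>. lich_solution g \<sigma> \<tau>0 \<phi> \<longrightarrow>
                 gen_metric g \<phi> = slice_metric a lb t0 \<and>
                 gen_sff g \<sigma> \<tau>0 \<phi> = slice_sff a lb t0"
    proof (intro allI impI)
      fix \<phi> assume "lich_solution g \<sigma> \<tau>0 \<phi>"
      hence "\<phi> = (\<lambda>s. c)" by (rule uniq)
      thus "gen_metric g \<phi> = slice_metric a lb t0 \<and> gen_sff g \<sigma> \<tau>0 \<phi> = slice_sff a lb t0"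
        using GM GS by simp
    qed
    show "slice_metric a lb t0 = (\<lambda>s. (c powr (q - 2)) *\<^sub>R g s)" by (rule SM)
    show "slice_metric a lb (sgn t0) = g_len lb" by (rule SM1)
  qed
  show ?thesis
    using main unfolding Let_def g_def \<sigma>_def lb_def c_def a_def sg_def t0_def q_def n_def .
qed


end
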